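(* For any constellation, bit mapping and coding, the bit error rate of a decoder with center-convex decision regions operating in the channel $\mathbf r=\mathbf s+\boldsymbol\xi$, $\boldsymbol\xi\sim\mathcal N(\mathbf 0,\sigma_0^2\mathbf I)$ in $\mathbb R^n$ (fixed signal), is a convex function of the noise power $\sigma_0^2$ in the low-noise (high-SNR) regime $b_n\sigma_0^2\le d_{\min}^2$, where $b_n=n+2+\sqrt{2(n+2)}$.
   Context: Setting: $\mathbf s\in\{\mathbf s_1,\dots,\mathbf s_M\}$ with priors $\pi_k$; the decoder has pairwise disjoint decision regions $\Omega_k$ independent of $\sigma_0$ (output $\mathbf s_k$ if $\mathbf r\in\Omega_k$); $\Omega_k$ is center-convex if for every $\mathbf x\in\Omega_k$ the segment from $\mathbf s_k$ to $\mathbf x$ lies in $\Omega_k$. BER $=\sum_i\sum_{j\ne i}\frac{h_{ij}}{\log_2M}\pi_i\Pr[\mathbf r\in\Omega_j\mid\mathbf s=\mathbf s_i]$, where $h_{ij}$ is the Hamming distance between the bit labels of $\mathbf s_i$ and $\mathbf s_j$. $d_{\min}=\min_kd_{\min,k}$, with $d_{\min,k}$ the minimum distance from $\mathbf s_k$ to the boundary of $\Omega_k$. *)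

theory Defs
  imports "HOL-Analysis.Analysis"
begin

definition hamming :: "bool list \<Rightarrow> bool list \<Rightarrow> nat" where
  "hamming xs ys = card {i. i < length xs \<and> xs ! i \<noteq> ys ! i}"

text \<open>Density of r = s + xi, xi ~ N(0, v I) on the n-dimensional Euclidean space, v = sigma_0^2.\<close>
definition gauss_density :: "real \<Rightarrow> 'a::euclidean_space \<Rightarrow> 'a \<Rightarrow> real" where
  "gauss_density v s x =
     (2 * pi * v) powr (- real DIM('a) / 2) * exp (- (norm (x - s))\<^sup>2 / (2 * v))"

definition prob_in :: "real \<Rightarrow> 'a::euclidean_space \<Rightarrow> 'a set \<Rightarrow> real" where
  "prob_in v s \<Omega> = (LINT x:\<Omega>|lebesgue. gauss_density v s x)"

definition ber :: "nat \<Rightarrow> (nat \<Rightarrow> 'a::euclidean_space) \<Rightarrow> (nat \<Rightarrow> real) \<Rightarrow> (nat \<Rightarrow> bool list)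
                  \<Rightarrow> (nat \<Rightarrow> 'a set) \<Rightarrow> real \<Rightarrow> real" where
  "ber M s \<pi> lab \<Omega> v =
     (\<Sum>i<M. \<Sum>j\<in>{..<M} - {i}.
        real (hamming (lab i) (lab j)) / log 2 (real M) * \<pi> i * prob_in v (s i) (\<Omega> j))"

definition center_convex :: "'a::real_vector \<Rightarrow> 'a set \<Rightarrow> bool" where
  "center_convex c \<Omega> \<longleftrightarrow> (\<forall>x\<in>\<Omega>. closed_segment c x \<subseteq> \<Omega>)"

definition dmin_k :: "'a::euclidean_space \<Rightarrow> 'a set \<Rightarrow> real" where
  "dmin_k c \<Omega> = infdist c (frontier \<Omega>)"

definition dmin :: "nat \<Rightarrow> (nat \<Rightarrow> 'a::euclidean_space) \<Rightarrow> (nat \<Rightarrow> 'a set) \<Rightarrow> real" where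
  "dmin M s \<Omega> = Min ((\<lambda>k. dmin_k (s k) (\<Omega> k)) ` {..<M})"

definition b_const :: "nat \<Rightarrow> real" where
  "b_const n = real n + 2 + sqrt (2 * (real n + 2))"

end

theory Submission
  imports Defs "HOL-Probability.Probability"
begin

lemma quad_ineq:
  fixes a v n :: real
  assumes v: "0 < v" and n: "0 \<le> n" and ab: "(n + 2 + sqrt (2*(n+2))) * v \<le> a"
  shows "(a/2 - (n/2) * v)\<^sup>2 - a * v + (n/2) * v\<^sup>2 \<ge> 0"
proof -
  define q where "q = sqrt (2*(n+2))"
  have q0: "q \<ge> 0" and q2: "q\<^sup>2 = 2*(n+2)" using n by (auto simp: q_def)
  have e: "(a/2 - (n/2) * v)\<^sup>2 - a * v + (n/2) * v\<^sup>2 = ((a - (n+2) * v)\<^sup>2 - (q * v)\<^sup>2)/4"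
  proof -
    have "(q * v)\<^sup>2 = 2*(n+2) * v\<^sup>2" by (simp add: power_mult_distrib q2)
    then show ?thesis by (simp add: power2_eq_square field_simps)
  qed
  have "q * v \<le> a - (n+2) * v" using ab by (simp add: q_def algebra_simps)
  moreover have "0 \<le> q * v" using q0 v by simp
  ultimately have "(q * v)\<^sup>2 \<le> (a - (n+2) * v)\<^sup>2" by (rule power_mono)
  then show ?thesis unfolding e by simp
qed

lemma gauss_convex:
  fixes a :: real and n :: nat
  shows "convex_on {v. 0 < v \<and> b_const n * v \<le> a}
           (\<lambda>v. (2 * pi * v) powr (- real n / 2) * exp (- a / (2 * v)))"
proof -
  define e where "e = - real n / 2"
  define h where "h = (\<lambda>v::real. (2 * pi * v) powr e * exp (- a / (2 * v)))"
  define g where "g = (\<lambda>v::real. a / (2 * v\<^sup>2) + e / v)"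
  define g' where "g' = (\<lambda>v::real. - a / v^3 - e / v\<^sup>2)"
  let ?C = "{v. 0 < v \<and> b_const n * v \<le> a}"
  have cvx: "convex ?C"
  proof -
    have "?C = {v. 0 < v} \<inter> {v. b_const n * v \<le> a}" by auto
    moreover have "convex {v::real. 0 < v}" using convex_halfspace_gt[of 0 "1::real"] by simp
    moreover have "convex {v::real. b_const n * v \<le> a}" using convex_halfspace_le[of "b_const n" a] by simp
    ultimately show ?thesis by (simp add: convex_Int)
  qed
  have dh: "DERIV h v :> h v * g v" if "0 < v" for v
  proof -
    have d1: "DERIV h v :> e * (2 * pi * v) powr (e - 1) * (2 * pi) * exp (- a / (2 * v))
              + (2 * pi * v) powr e * (exp (- a / (2 * v)) * (a / (2 * v\<^sup>2)))"
      unfolding h_def using that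
      by (auto intro!: derivative_eq_intros simp: power2_eq_square power3_eq_cube field_simps)
    have eq2: "e * (2 * pi * v) powr (e - 1) * (2 * pi) = (2 * pi * v) powr e * (e / v)"
      using that by (simp add: powr_diff field_simps)
    have "e * (2 * pi * v) powr (e - 1) * (2 * pi) * exp (- a / (2 * v))
              + (2 * pi * v) powr e * (exp (- a / (2 * v)) * (a / (2 * v\<^sup>2))) = h v * g v"
      unfolding eq2 by (simp add: h_def g_def algebra_simps)
    with d1 show ?thesis by simp
  qed
  have dg: "DERIV g v :> g' v" if "0 < v" for v
    unfolding g_def g'_def using that
    by (auto intro!: derivative_eq_intros simp: power2_eq_square power3_eq_cube field_simps)
  show ?thesis
    unfolding e_def[symmetric] h_def[symmetric]
  proof (rule f''_ge0_imp_convex[OF cvx])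
    fix v assume "v \<in> ?C"
    then have v: "0 < v" and bv: "b_const n * v \<le> a" by auto
    show "DERIV h v :> h v * g v" using dh[OF v] .
    show "DERIV (\<lambda>v. h v * g v) v :> h v * g v * g v + h v * g' v"
      using dh[OF v] dg[OF v] by (auto intro!: derivative_eq_intros)
    have h0: "0 \<le> h v" unfolding h_def by simp
    have "(a/2 - (real n/2) * v)\<^sup>2 - a * v + (real n/2) * v\<^sup>2 \<ge> 0"
      using quad_ineq[OF v _ bv[unfolded b_const_def]] by simp
    moreover have "g v * g v + g' v = ((a/2 - (real n/2) * v)\<^sup>2 - a * v + (real n/2) * v\<^sup>2) / v^4"
      using v by (simp add: g_def g'_def e_def eval_nat_numeral field_simps)
    ultimately have "g v * g v + g' v \<ge> 0" using v by simp
    then show "0 \<le> h v * g v * g v + h v * g' v"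
      using h0 by (metis distrib_left mult.assoc mult_nonneg_nonneg)
  qed
qed

lemma gauss_prod:
  fixes s x :: "'a::euclidean_space"
  assumes v: "0 < v"
  shows "gauss_density v s x = (\<Prod>b\<in>Basis. normal_density (s \<bullet> b) (sqrt v) (x \<bullet> b))"
proof -
  have sq: "(sqrt v)\<^sup>2 = v" using v by simp
  have "(\<Prod>b\<in>Basis. normal_density (s \<bullet> b) (sqrt v) (x \<bullet> b))
       = (\<Prod>b\<in>Basis. (1 / sqrt (2 * pi * v)) * exp (- (x \<bullet> b - s \<bullet> b)\<^sup>2 / (2 * v)))"
    unfolding normal_density_def sq by simp
  also have "\<dots> = (1 / sqrt (2 * pi * v)) ^ DIM('a) * exp (\<Sum>b\<in>Basis. - (x \<bullet> b - s \<bullet> b)\<^sup>2 / (2 * v))"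
    by (simp only: prod.distrib prod_constant exp_sum[OF finite_Basis])
  also have "(\<Sum>b\<in>Basis. - (x \<bullet> b - s \<bullet> b)\<^sup>2 / (2 * v)) = - (norm (x - s))\<^sup>2 / (2 * v)"
  proof -
    have "(norm (x - s))\<^sup>2 = (\<Sum>b\<in>Basis. ((x - s) \<bullet> b) * ((x - s) \<bullet> b))"
      by (simp add: power2_norm_eq_inner euclidean_inner[of "x - s" "x - s"])
    then show ?thesis
      by (simp add: sum_divide_distrib[symmetric] sum_negf inner_diff_left power2_eq_square)
  qed
  also have "(1 / sqrt (2 * pi * v)) ^ DIM('a) = (2 * pi * v) powr (- real DIM('a) / 2)"
  proof -
    have p: "0 < 2 * pi * v" using v by simp
    let ?y = "2 * pi * v"
    have a1: "?y powr (1/2) = sqrt ?y" using p by (simp add: powr_half_sqrt)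
    have a2: "?y powr (-(1/2)) = 1 / ?y powr (1/2)" by (rule powr_minus_divide)
    have "(1 / sqrt ?y) ^ DIM('a) = (?y powr (-(1/2))) ^ DIM('a)" using a1 a2 by simp
    also have "\<dots> = (?y powr (-(1/2))) powr real DIM('a)"
      by (rule powr_realpow[symmetric]) (use p v in simp)
    also have "\<dots> = ?y powr (-(1/2) * real DIM('a))" by (rule powr_powr)
    finally show ?thesis by simp
  qed
  finally show ?thesis by (simp add: gauss_density_def)
qed

lemma gauss_integrable:
  fixes s :: "'a::euclidean_space"
  assumes v: "0 < v"
  shows "integrable lborel (gauss_density v s)"
proof (rule integrableI_nonneg)
  have eq: "gauss_density v s = (\<lambda>x. \<Prod>b\<in>Basis. normal_density (s \<bullet> b) (sqrt v) (x \<bullet> b))"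
    using gauss_prod[OF v] by auto
  show "gauss_density v s \<in> borel_measurable lborel" unfolding eq by measurable
  show "AE x in lborel. 0 \<le> gauss_density v s x" unfolding eq by (simp add: prod_nonneg)
  have "(\<integral>\<^sup>+x. ennreal (gauss_density v s x) \<partial>lborel)
     = (\<integral>\<^sup>+x. (\<Prod>b\<in>Basis. ennreal (normal_density (s \<bullet> b) (sqrt v) (x \<bullet> b))) \<partial>lborel)"
    unfolding eq by (simp add: prod_ennreal)
  also have "\<dots> = (\<Prod>b\<in>Basis. (\<integral>\<^sup>+x. ennreal (normal_density (s \<bullet> b) (sqrt v) x) \<partial>lborel))"
    by (rule nn_integral_lborel_prod) auto
  also have "\<dots> = 1"
  proof -
    have "(\<integral>\<^sup>+x. ennreal (normal_density (s \<bullet> b) (sqrt v) x) \<partial>lborel) = 1" for b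
      using nn_integral_eq_integral[OF integrable_normal_density[where \<mu>="s \<bullet> b" and \<sigma>="sqrt v"]]
        integral_normal_density[where \<mu>="s \<bullet> b" and \<sigma>="sqrt v"] v by simp
    then show ?thesis by simp
  qed
  finally show "(\<integral>\<^sup>+x. ennreal (gauss_density v s x) \<partial>lborel) < \<infinity>" by simp
qed

lemma gauss_set_integrable:
  fixes s :: "'a::euclidean_space"
  assumes v: "0 < v" and meas: "\<Omega> \<in> sets lebesgue"
  shows "set_integrable lebesgue \<Omega> (gauss_density v s)"
proof -
  have i: "integrable lborel (gauss_density v s)" by (rule gauss_integrable[OF v])
  then have "gauss_density v s \<in> borel_measurable lborel" by auto
  then have "integrable lebesgue (gauss_density v s)" using i by (simp add: integrable_completion)
  then show ?thesis unfolding set_integrable_def by (rule integrable_mult_indicator[OF meas])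
qed

lemma prob_in_convex:
  fixes s :: "'a::euclidean_space" and S :: "real set"
  assumes meas: "\<Omega> \<in> sets lebesgue" and cS: "convex S" and pos: "\<And>v. v \<in> S \<Longrightarrow> 0 < v"
    and far: "\<And>x v. x \<in> \<Omega> \<Longrightarrow> v \<in> S \<Longrightarrow> b_const DIM('a) * v \<le> (norm (x - s))\<^sup>2"
  shows "convex_on S (\<lambda>v. prob_in v s \<Omega>)"
proof (rule convex_onI[OF _ cS])
  fix t u w :: real assume t0: "0 < t" and t1: "t < 1" and u: "u \<in> S" and w: "w \<in> S"
  define z where "z = (1 - t) *\<^sub>R u + t *\<^sub>R w"
  have z: "z \<in> S" unfolding z_def using convexD[OF cS u w, of "1-t" t] t0 t1 by simp
  have iu: "set_integrable lebesgue \<Omega> (gauss_density u s)" by (rule gauss_set_integrable[OF pos[OF u] meas])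
  have iw: "set_integrable lebesgue \<Omega> (gauss_density w s)" by (rule gauss_set_integrable[OF pos[OF w] meas])
  have iz: "set_integrable lebesgue \<Omega> (gauss_density z s)" by (rule gauss_set_integrable[OF pos[OF z] meas])
  have iu': "set_integrable lebesgue \<Omega> (\<lambda>x. (1 - t) * gauss_density u s x)" using iu by auto
  have iw': "set_integrable lebesgue \<Omega> (\<lambda>x. t * gauss_density w s x)" using iw by auto
  have pw: "gauss_density z s x \<le> (1 - t) * gauss_density u s x + t * gauss_density w s x"
    if x: "x \<in> \<Omega>" for x
  proof -
    let ?a = "(norm (x - s))\<^sup>2"
    have cv: "convex_on {v. 0 < v \<and> b_const DIM('a) * v \<le> ?a}
           (\<lambda>v. (2 * pi * v) powr (- real DIM('a) / 2) * exp (- ?a / (2 * v)))"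
      by (rule gauss_convex)
    have "u \<in> {v. 0 < v \<and> b_const DIM('a) * v \<le> ?a}" using pos[OF u] far[OF x u] by simp
    moreover have "w \<in> {v. 0 < v \<and> b_const DIM('a) * v \<le> ?a}" using pos[OF w] far[OF x w] by simp
    ultimately show ?thesis
      using convex_onD[OF cv, of t u w] t0 t1 unfolding z_def gauss_density_def by simp
  qed
  have "prob_in z s \<Omega> \<le> (LINT x:\<Omega>|lebesgue. (1 - t) * gauss_density u s x + t * gauss_density w s x)"
    unfolding prob_in_def by (rule set_integral_mono[OF iz set_integral_add(1)[OF iu' iw'] pw])
  also have "\<dots> = (1 - t) * prob_in u s \<Omega> + t * prob_in w s \<Omega>"
    unfolding prob_in_def set_integral_add(2)[OF iu' iw'] by simp
  finally show "prob_in ((1 - t) *\<^sub>R u + t *\<^sub>R w) s \<Omega> \<le> (1 - t) * prob_in u s \<Omega> + t * prob_in w s \<Omega>"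
    unfolding z_def .
qed

lemma convex_on_sum_fun:
  fixes S :: "real set"
  assumes "finite I" "convex S" "\<And>i. i \<in> I \<Longrightarrow> convex_on S (f i)"
  shows "convex_on S (\<lambda>x. \<Sum>i\<in>I. f i x)"
  using assms by (induction I rule: finite_induct) (auto simp: convex_on_const)

lemma far_lemma:
  fixes s :: "nat \<Rightarrow> 'a::euclidean_space" and \<Omega> :: "nat \<Rightarrow> 'a set"
  assumes M2: "M \<ge> 2"
    and disj: "\<And>i j. i < M \<Longrightarrow> j < M \<Longrightarrow> i \<noteq> j \<Longrightarrow> \<Omega> i \<inter> \<Omega> j = {}"
    and cc: "\<And>k. k < M \<Longrightarrow> center_convex (s k) (\<Omega> k)"
    and ij: "i < M" "j < M" "i \<noteq> j" and x: "x \<in> \<Omega> j"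
    and v: "0 < v" "b_const DIM('a) * v \<le> (dmin M s \<Omega>)\<^sup>2"
  shows "b_const DIM('a) * v \<le> (norm (x - s i))\<^sup>2"
proof -
  have fin: "finite ((\<lambda>k. dmin_k (s k) (\<Omega> k)) ` {..<M})" by simp
  have ne: "(\<lambda>k. dmin_k (s k) (\<Omega> k)) ` {..<M} \<noteq> {}" proof -
    have "0 \<in> {..<M}" using M2 by simp
    then show ?thesis by blast
  qed
  have d0: "0 \<le> dmin M s \<Omega>" unfolding dmin_def using fin ne
    by (subst Min_ge_iff) (auto simp: dmin_k_def infdist_nonneg)
  have dle: "dmin M s \<Omega> \<le> dmin_k (s i) (\<Omega> i)" unfolding dmin_def using fin ij(1) by (auto intro: Min_le)
  have bpos: "0 < b_const DIM('a)" unfolding b_const_def by (simp add: add_pos_nonneg)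
  have "\<Omega> i \<noteq> {}"
  proof
    assume "\<Omega> i = {}"
    then have "dmin_k (s i) (\<Omega> i) = 0" by (simp add: dmin_k_def infdist_def)
    then have "dmin M s \<Omega> = 0" using d0 dle by simp
    then show False using v bpos mult_pos_pos[OF bpos v(1)] by simp
  qed
  then obtain y where y: "y \<in> \<Omega> i" by auto
  have si: "s i \<in> \<Omega> i" using cc[OF ij(1)] y unfolding center_convex_def by auto
  have xi: "x \<notin> \<Omega> i" using disj[OF ij] x by auto
  have "closed_segment (s i) x \<inter> frontier (\<Omega> i) \<noteq> {}"
    by (rule connected_Int_frontier) (use si xi in auto)
  then obtain p where p: "p \<in> closed_segment (s i) x" "p \<in> frontier (\<Omega> i)" by auto
  have "dmin_k (s i) (\<Omega> i) \<le> dist (s i) p" unfolding dmin_k_def by (rule infdist_le[OF p(2)])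
  also have "\<dots> \<le> dist (s i) x" using dist_in_closed_segment[OF p(1)] by (simp add: dist_commute)
  finally have "dmin M s \<Omega> \<le> norm (x - s i)" using dle by (simp add: dist_norm norm_minus_commute)
  then have "(dmin M s \<Omega>)\<^sup>2 \<le> (norm (x - s i))\<^sup>2" using d0 by (rule power_mono)
  then show ?thesis using v by simp
qed

theorem corollary5p2:
  fixes M :: nat and s :: "nat \<Rightarrow> 'a::euclidean_space" and \<pi> :: "nat \<Rightarrow> real"
    and lab :: "nat \<Rightarrow> bool list" and \<Omega> :: "nat \<Rightarrow> 'a set"
  assumes M2: "M \<ge> 2"
    and prior_nonneg: "\<And>k. k < M \<Longrightarrow> \<pi> k \<ge> 0"
    and prior_sum: "(\<Sum>k<M. \<pi> k) = 1"
    and lab_len: "\<And>i j. i < M \<Longrightarrow> j < M \<Longrightarrow> length (lab i) = length (lab j)"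
    and meas: "\<And>k. k < M \<Longrightarrow> \<Omega> k \<in> sets lebesgue"
    and disj: "\<And>i j. i < M \<Longrightarrow> j < M \<Longrightarrow> i \<noteq> j \<Longrightarrow> \<Omega> i \<inter> \<Omega> j = {}"
    and cc: "\<And>k. k < M \<Longrightarrow> center_convex (s k) (\<Omega> k)"
  shows "convex_on {v. 0 < v \<and> b_const DIM('a) * v \<le> (dmin M s \<Omega>)\<^sup>2} (ber M s \<pi> lab \<Omega>)"
proof -
  let ?S = "{v. 0 < v \<and> b_const DIM('a) * v \<le> (dmin M s \<Omega>)\<^sup>2}"
  have cS: "convex ?S"
  proof -
    have "?S = {v. 0 < v} \<inter> {v. b_const DIM('a) * v \<le> (dmin M s \<Omega>)\<^sup>2}" by auto
    moreover have "convex {v::real. 0 < v}" using convex_halfspace_gt[of 0 "1::real"] by simp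
    moreover have "convex {v::real. b_const DIM('a) * v \<le> (dmin M s \<Omega>)\<^sup>2}"
      using convex_halfspace_le[of "b_const DIM('a)" "(dmin M s \<Omega>)\<^sup>2"] by simp
    ultimately show ?thesis by (simp add: convex_Int)
  qed
  have lg: "0 < log 2 (real M)" using M2 by simp
  have trm: "convex_on ?S (\<lambda>v. real (hamming (lab i) (lab j)) / log 2 (real M) * \<pi> i * prob_in v (s i) (\<Omega> j))"
    if ij: "i < M" "j < M" "i \<noteq> j" for i j
  proof (rule convex_on_cmul)
    show "0 \<le> real (hamming (lab i) (lab j)) / log 2 (real M) * \<pi> i"
      using lg prior_nonneg[OF ij(1)] by simp
    show "convex_on ?S (\<lambda>v. prob_in v (s i) (\<Omega> j))"
    proof (rule prob_in_convex[OF meas[OF ij(2)] cS])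
      show "\<And>v. v \<in> ?S \<Longrightarrow> 0 < v" by simp
      fix x v assume "x \<in> \<Omega> j" "v \<in> ?S"
      then show "b_const DIM('a) * v \<le> (norm (x - s i))\<^sup>2"
        using far_lemma[OF M2 disj cc ij] by auto
    qed
  qed
  show ?thesis
    unfolding ber_def
    by (intro convex_on_sum_fun cS finite_lessThan finite_Diff trm) auto
qed

end
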